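(* Let $y,l,u\in\mathcal{R}(\mathbb{R}^{+},\mathbb{R})$ be such that $l\leq u$, $l_0\leq y_0\leq u_0$, and $\inf_{s\leq t}(u_s-l_s)>0$ for every $t\geq 0$. Let $(x,k)$ with $k=\phi^1-\phi^2$ and $(\tilde{x},\tilde{k})$ with $\tilde{k}=\tilde{\phi}^1-\tilde{\phi}^2$ be two solutions of the reflection problem $RP^u_l(y)$. Then: (i) $\{t:\Delta^{+}\phi^1_t>0\}\cap\{t:\Delta^{+}\phi^2_t>0\}=\emptyset$; (ii) $\{t:\Delta^{+}\phi^1_t>0\}=\{t:\Delta^{+}\tilde{\phi}^1_t>0\}$ and $\{t:\Delta^{+}\phi^2_t>0\}=\{t:\Delta^{+}\tilde{\phi}^2_t>0\}$.
   Context: A function $f:\mathbb{R}^+=[0,\infty)\to\mathbb{R}$ is regulated if it has a left limit $f_{t^-}$ at every $t>0$ and a right limit $f_{t^+}$ at every $t\geq0$; $\mathcal{R}(\mathbb{R}^{+},\mathbb{R})$ is the set of regulated functions. Write $\Delta^+f_t=f_{t^+}-f_t$, $\Delta^-f_t=f_t-f_{t^-}$, $a\wedge b=\min(a,b)$, $a\vee b=\max(a,b)$. A regulated function $\phi$ of bounded variation (on every $[0,t]$) decomposes as $\phi_t=\phi^c_t+\sum_{0<s\leq t}\Delta^-\phi_s+\sum_{0\leq s<t}\Delta^+\phi_s$ with $\phi^c$ continuous; its right-continuous part is $\phi^r_t=\phi^c_t+\sum_{0<s\leq t}\Delta^-\phi_s$. Reflection problem $RP^u_l(y)$: for $y,l,u\in\mathcal{R}(\mathbb{R}^{+},\mathbb{R})$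 with $l_0\leq y_0\leq u_0$, a pair $(x,k)$ of regulated functions is a solution if there exist $\phi^1,\phi^2$ such that: (i) $x=y+k=y+\phi^1-\phi^2$; (ii) $l\leq x\leq u$; (iii) $\phi^1,\phi^2$ are non-decreasing with $\phi^1_0=\phi^2_0=0$; (iv) $\int_{[0,\infty[}\big((x_s-l_s)\wedge(x_{s^+}-l_{s^+})\big)\,d\phi^{1,r}_s=\int_{[0,\infty[}\big((u_s-x_s)\wedge(u_{s^+}-x_{s^+})\big)\,d\phi^{2,r}_s=0$; (v) for every $t\geq0$, $\sum_{s\leq t}(x_{s^+}-l_{s^+})\Delta^+\phi^1_s=\sum_{s\leq t}(u_s-x_s)\Delta^+\phi^1_s=0$ and $\sum_{s\leq t}(u_{s^+}-x_{s^+})\Delta^+\phi^2_s=\sum_{s\leq t}(x_s-l_s)\Delta^+\phi^2_s=0$. Here $\phi^{i,r}$ is the right-continuous part of $\phi^i$. *)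

theory Defs
  imports "HOL-Analysis.Analysis"
begin

text \<open>Functions on R+ = [0,inf) are modelled as real => real; values at negative
  arguments are irrelevant (all conditions only look at t >= 0 and at one-sided limits
  at points t > 0 resp. t >= 0).\<close>

definition regulated :: "(real \<Rightarrow> real) \<Rightarrow> bool" where
  "regulated f \<longleftrightarrow>
     (\<forall>t>0. \<exists>L. (f \<longlongrightarrow> L) (at_left t)) \<and>
     (\<forall>t\<ge>0. \<exists>L. (f \<longlongrightarrow> L) (at_right t))"

definition rlim :: "(real \<Rightarrow> real) \<Rightarrow> real \<Rightarrow> real" where
  "rlim f t = Lim (at_right t) f"

definition llim :: "(real \<Rightarrow> real) \<Rightarrow> real \<Rightarrow> real" where
  "llim f t = Lim (at_left t) f"

definition jump_plus :: "(real \<Rightarrow> real) \<Rightarrow> real \<Rightarrow> real" where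
  "jump_plus f t = rlim f t - f t"

text \<open>Right-continuous part phi^r_t = phi^c_t + sum_{0<s<=t} Delta^- phi_s, which by the
  decomposition phi_t = phi^c_t + sum_{0<s<=t} Delta^- phi_s + sum_{0<=s<t} Delta^+ phi_s equals
  phi_t - sum_{0<=s<t} Delta^+ phi_s.  Extended by 0 to negative arguments (phi^r_0 = phi_0 = 0
  here), so that the associated Lebesgue-Stieltjes measure has no mass on (-inf,0].\<close>
definition rc_part :: "(real \<Rightarrow> real) \<Rightarrow> real \<Rightarrow> real" where
  "rc_part \<phi> t = (if t < 0 then 0 else \<phi> t - (\<Sum>\<^sub>\<infinity>s\<in>{0..<t}. jump_plus \<phi> s))"

definition RP_solution ::
  "(real \<Rightarrow> real) \<Rightarrow> (real \<Rightarrow> real) \<Rightarrow> (real \<Rightarrow> real) \<Rightarrow>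
   (real \<Rightarrow> real) \<Rightarrow> (real \<Rightarrow> real) \<Rightarrow> (real \<Rightarrow> real) \<Rightarrow> (real \<Rightarrow> real) \<Rightarrow> bool" where
  "RP_solution y l u x k \<phi>1 \<phi>2 \<longleftrightarrow>
     regulated x \<and> regulated k \<and>
     \<comment> \<open>(i)\<close>
     (\<forall>t\<ge>0. x t = y t + k t \<and> k t = \<phi>1 t - \<phi>2 t) \<and>
     \<comment> \<open>(ii)\<close>
     (\<forall>t\<ge>0. l t \<le> x t \<and> x t \<le> u t) \<and>
     \<comment> \<open>(iii)\<close>
     mono_on {0..} \<phi>1 \<and> mono_on {0..} \<phi>2 \<and> \<phi>1 0 = 0 \<and> \<phi>2 0 = 0 \<and>
     \<comment> \<open>(iv)\<close>
     (\<integral>\<^sup>+ s \<in> {0..}. ennreal (min (x s - l s) (rlim x s - rlim l s))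
         \<partial>interval_measure (rc_part \<phi>1)) = 0 \<and>
     (\<integral>\<^sup>+ s \<in> {0..}. ennreal (min (u s - x s) (rlim u s - rlim x s))
         \<partial>interval_measure (rc_part \<phi>2)) = 0 \<and>
     \<comment> \<open>(v)\<close>
     (\<forall>t\<ge>0.
        ((\<lambda>s. (rlim x s - rlim l s) * jump_plus \<phi>1 s) has_sum 0) {0..t} \<and>
        ((\<lambda>s. (u s - x s) * jump_plus \<phi>1 s) has_sum 0) {0..t} \<and>
        ((\<lambda>s. (rlim u s - rlim x s) * jump_plus \<phi>2 s) has_sum 0) {0..t} \<and>
        ((\<lambda>s. (x s - l s) * jump_plus \<phi>2 s) has_sum 0) {0..t})"

end

theory Submission
  imports Defs
begin

lemma mono_rlim:
  assumes m: "mono_on {0..} f" and t: "t \<ge> (0::real)"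
  shows "(f \<longlongrightarrow> rlim f t) (at_right t)" "f t \<le> rlim f t"
proof -
  have "(f \<longlongrightarrow> Inf (f ` ({t<..} \<inter> {0..}))) (at t within ({t<..} \<inter> {0..}))"
  proof (rule Lim_right_bound[where K="f t"])
    fix a b :: real assume "a \<in> {0..}" "b \<in> {0..}" "a \<le> b"
    then show "f a \<le> f b" using mono_onD[OF m] by blast
  next
    fix a :: real assume "a \<in> {0..}" "t < a"
    then show "f t \<le> f a" using mono_onD[OF m, of t a] t by simp
  qed
  moreover have "{t<..} \<inter> {0..} = {t<..}" using t by auto
  ultimately have L: "(f \<longlongrightarrow> Inf (f ` ({t<..} \<inter> {0..}))) (at_right t)" by simp
  have E: "Lim (at_right t) f = Inf (f ` ({t<..} \<inter> {0..}))"
    by (rule tendsto_Lim[OF trivial_limit_at_right_real L])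
  show 1: "(f \<longlongrightarrow> rlim f t) (at_right t)"
    unfolding rlim_def E by (rule L)
  have gt: "eventually (\<lambda>s. s > t) (at_right t)" by (simp add: eventually_at_filter)
  have "eventually (\<lambda>s. f t \<le> f s) (at_right t)"
  proof (rule eventually_mono[OF gt])
    fix s assume "s > t" then show "f t \<le> f s" using mono_onD[OF m, of t s] t by simp
  qed
  then show "f t \<le> rlim f t"
    by (rule tendsto_lowerbound[OF 1 _ trivial_limit_at_right_real])
qed

lemma reg_rlim:
  assumes "regulated f" "t \<ge> (0::real)"
  shows "(f \<longlongrightarrow> rlim f t) (at_right t)"
proof -
  obtain L where L: "(f \<longlongrightarrow> L) (at_right t)" using assms unfolding regulated_def by blast
  have "rlim f t = L" unfolding rlim_def by (rule tendsto_Lim[OF trivial_limit_at_right_real L])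
  then show ?thesis using L by simp
qed

lemma ev_pos:
  assumes "t \<ge> (0::real)"
  shows "eventually (\<lambda>s. s \<ge> 0) (at_right t)"
proof -
  have gt: "eventually (\<lambda>s. s > t) (at_right t)" by (simp add: eventually_at_filter)
  then show ?thesis by (rule eventually_mono) (use assms in auto)
qed

lemma has_sum_zero_nonneg:
  fixes g :: "real \<Rightarrow> real"
  assumes "(g has_sum 0) B" "\<And>s. s \<in> B \<Longrightarrow> g s \<ge> 0" "t \<in> B"
  shows "g t = 0"
proof -
  have H: "((\<lambda>s. g s) has_sum g t) {t}" by (rule has_sum_finiteI) auto
  have "g t \<le> 0" by (rule has_sum_mono_neutral[OF H assms(1)]) (use assms in auto)
  with assms show ?thesis by force
qed

lemma sol_facts:
  assumes rl: "regulated l" and ru: "regulated u" and ry: "regulated y"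
    and S: "RP_solution y l u x k \<phi>1 \<phi>2" and t: "t \<ge> 0"
  shows "jump_plus \<phi>1 t \<ge> 0" "jump_plus \<phi>2 t \<ge> 0"
    "jump_plus \<phi>1 t > 0 \<Longrightarrow> rlim x t = rlim l t \<and> x t = u t"
    "jump_plus \<phi>2 t > 0 \<Longrightarrow> rlim u t = rlim x t \<and> x t = l t"
    "rlim x t - x t = (rlim y t - y t) + jump_plus \<phi>1 t - jump_plus \<phi>2 t"
    "rlim l t \<le> rlim x t" "rlim x t \<le> rlim u t" "l t \<le> x t" "x t \<le> u t"
proof -
  note SS = S[unfolded RP_solution_def]
  have rx: "regulated x" using SS by blast
  have eq: "\<forall>t\<ge>0. x t = y t + k t \<and> k t = \<phi>1 t - \<phi>2 t" using SS by blast
  have b: "\<forall>t\<ge>0. l t \<le> x t \<and> x t \<le> u t" using SS by blast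
  have m1: "mono_on {0..} \<phi>1" using SS by blast
  have m2: "mono_on {0..} \<phi>2" using SS by blast
  have v: "\<forall>t\<ge>0.
        ((\<lambda>s. (rlim x s - rlim l s) * jump_plus \<phi>1 s) has_sum 0) {0..t} \<and>
        ((\<lambda>s. (u s - x s) * jump_plus \<phi>1 s) has_sum 0) {0..t} \<and>
        ((\<lambda>s. (rlim u s - rlim x s) * jump_plus \<phi>2 s) has_sum 0) {0..t} \<and>
        ((\<lambda>s. (x s - l s) * jump_plus \<phi>2 s) has_sum 0) {0..t}"
    using SS by blast
  have J1: "\<And>s. s \<ge> 0 \<Longrightarrow> jump_plus \<phi>1 s \<ge> 0"
    using mono_rlim(2)[OF m1] unfolding jump_plus_def by force
  have J2: "\<And>s. s \<ge> 0 \<Longrightarrow> jump_plus \<phi>2 s \<ge> 0"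
    using mono_rlim(2)[OF m2] unfolding jump_plus_def by force
  show "jump_plus \<phi>1 t \<ge> 0" "jump_plus \<phi>2 t \<ge> 0" using J1 J2 t by auto
  have R1: "\<And>s. s \<ge> 0 \<Longrightarrow> rlim l s \<le> rlim x s"
  proof -
    fix s :: real assume s: "s \<ge> 0"
    have "eventually (\<lambda>r. l r \<le> x r) (at_right s)"
      using ev_pos[OF s] by eventually_elim (use b in auto)
    then show "rlim l s \<le> rlim x s"
      using tendsto_le[OF trivial_limit_at_right_real reg_rlim[OF rx s] reg_rlim[OF rl s]] by blast
  qed
  have R2: "\<And>s. s \<ge> 0 \<Longrightarrow> rlim x s \<le> rlim u s"
  proof -
    fix s :: real assume s: "s \<ge> 0"
    have "eventually (\<lambda>r. x r \<le> u r) (at_right s)"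
      using ev_pos[OF s] by eventually_elim (use b in auto)
    then show "rlim x s \<le> rlim u s"
      using tendsto_le[OF trivial_limit_at_right_real reg_rlim[OF ru s] reg_rlim[OF rx s]] by blast
  qed
  show "rlim l t \<le> rlim x t" "rlim x t \<le> rlim u t" "l t \<le> x t" "x t \<le> u t"
    using R1 R2 b t by auto
  have tt: "t \<in> {0..t}" using t by auto
  from v t have v1: "((\<lambda>s. (rlim x s - rlim l s) * jump_plus \<phi>1 s) has_sum 0) {0..t}"
    and v2: "((\<lambda>s. (u s - x s) * jump_plus \<phi>1 s) has_sum 0) {0..t}"
    and v3: "((\<lambda>s. (rlim u s - rlim x s) * jump_plus \<phi>2 s) has_sum 0) {0..t}"
    and v4: "((\<lambda>s. (x s - l s) * jump_plus \<phi>2 s) has_sum 0) {0..t}" by auto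
  have z1: "(rlim x t - rlim l t) * jump_plus \<phi>1 t = 0"
    by (rule has_sum_zero_nonneg[OF v1 _ tt]) (use R1 J1 in \<open>auto intro!: mult_nonneg_nonneg\<close>)
  have z2: "(u t - x t) * jump_plus \<phi>1 t = 0"
    by (rule has_sum_zero_nonneg[OF v2 _ tt]) (use b J1 in \<open>auto intro!: mult_nonneg_nonneg\<close>)
  have z3: "(rlim u t - rlim x t) * jump_plus \<phi>2 t = 0"
    by (rule has_sum_zero_nonneg[OF v3 _ tt]) (use R2 J2 in \<open>auto intro!: mult_nonneg_nonneg\<close>)
  have z4: "(x t - l t) * jump_plus \<phi>2 t = 0"
    by (rule has_sum_zero_nonneg[OF v4 _ tt]) (use b J2 in \<open>auto intro!: mult_nonneg_nonneg\<close>)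
  show "jump_plus \<phi>1 t > 0 \<Longrightarrow> rlim x t = rlim l t \<and> x t = u t" using z1 z2 by auto
  show "jump_plus \<phi>2 t > 0 \<Longrightarrow> rlim u t = rlim x t \<and> x t = l t" using z3 z4 by auto
  have "((\<lambda>s. y s + (\<phi>1 s - \<phi>2 s)) \<longlongrightarrow> rlim y t + (rlim \<phi>1 t - rlim \<phi>2 t)) (at_right t)"
    by (intro tendsto_intros reg_rlim[OF ry t] mono_rlim(1)[OF m1 t] mono_rlim(1)[OF m2 t])
  moreover have "eventually (\<lambda>s. y s + (\<phi>1 s - \<phi>2 s) = x s) (at_right t)"
    using ev_pos[OF t] by eventually_elim (use eq in auto)
  ultimately have "(x \<longlongrightarrow> rlim y t + (rlim \<phi>1 t - rlim \<phi>2 t)) (at_right t)"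
    using tendsto_cong[of _ _ "at_right t"] by (simp add: tendsto_cong)
  then have "rlim x t = rlim y t + (rlim \<phi>1 t - rlim \<phi>2 t)"
    using tendsto_unique[OF trivial_limit_at_right_real reg_rlim[OF rx t]] by blast
  then show "rlim x t - x t = (rlim y t - y t) + jump_plus \<phi>1 t - jump_plus \<phi>2 t"
    using eq t unfolding jump_plus_def by auto
qed

theorem lemma1:
  fixes y l u x k \<phi>1 \<phi>2 x' k' \<psi>1 \<psi>2 :: "real \<Rightarrow> real"
  assumes "regulated y" and "regulated l" and "regulated u"
    and "\<forall>t\<ge>0. l t \<le> u t"
    and "l 0 \<le> y 0" and "y 0 \<le> u 0"
    and "\<forall>t\<ge>0. (INF s\<in>{0..t}. u s - l s) > 0"
    and "RP_solution y l u x k \<phi>1 \<phi>2"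
    and "RP_solution y l u x' k' \<psi>1 \<psi>2"
  shows "{t. t \<ge> 0 \<and> jump_plus \<phi>1 t > 0} \<inter> {t. t \<ge> 0 \<and> jump_plus \<phi>2 t > 0} = {}
    \<and> {t. t \<ge> 0 \<and> jump_plus \<phi>1 t > 0} = {t. t \<ge> 0 \<and> jump_plus \<psi>1 t > 0}
    \<and> {t. t \<ge> 0 \<and> jump_plus \<phi>2 t > 0} = {t. t \<ge> 0 \<and> jump_plus \<psi>2 t > 0}"
proof -
  have gap: "u t - l t > 0" if t: "t \<ge> 0" for t
  proof -
    have "(INF s\<in>{0..t}. u s - l s) \<le> u t - l t"
      by (rule cINF_lower) (use t assms(4) in \<open>auto intro!: bdd_belowI2[where m=0]\<close>)
    with assms(7) t show ?thesis by force
  qed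
  note F = sol_facts[OF assms(2,3,1,8)]
  note G = sol_facts[OF assms(2,3,1,9)]
  have i: "\<not> (jump_plus \<phi>1 t > 0 \<and> jump_plus \<phi>2 t > 0)" if "t \<ge> 0" for t
    using F(3,4)[OF that] gap[OF that] by auto
  have i': "\<not> (jump_plus \<psi>1 t > 0 \<and> jump_plus \<psi>2 t > 0)" if "t \<ge> 0" for t
    using G(3,4)[OF that] gap[OF that] by auto
  have a: "jump_plus \<phi>1 t > 0 \<longleftrightarrow> jump_plus \<psi>1 t > 0" if t: "t \<ge> 0" for t
  proof
    assume "jump_plus \<phi>1 t > 0"
    then show "jump_plus \<psi>1 t > 0"
      using F(1-9)[OF t] G(1-9)[OF t] i[OF t] by (smt (verit))
  next
    assume "jump_plus \<psi>1 t > 0"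
    then show "jump_plus \<phi>1 t > 0"
      using F(1-9)[OF t] G(1-9)[OF t] i'[OF t] by (smt (verit))
  qed
  have b: "jump_plus \<phi>2 t > 0 \<longleftrightarrow> jump_plus \<psi>2 t > 0" if t: "t \<ge> 0" for t
  proof
    assume "jump_plus \<phi>2 t > 0"
    then show "jump_plus \<psi>2 t > 0"
      using F(1-9)[OF t] G(1-9)[OF t] i[OF t] by (smt (verit))
  next
    assume "jump_plus \<psi>2 t > 0"
    then show "jump_plus \<phi>2 t > 0"
      using F(1-9)[OF t] G(1-9)[OF t] i'[OF t] by (smt (verit))
  qed
  show ?thesis using i a b by auto
qed

end
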